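(* Let $m$ and $n$ be relatively prime positive integers. Then $S(A_m \otimes A_n) = S(A_{mn})$, where $\otimes$ denotes the Kronecker product of matrices.
   Context: For a positive integer $k$, let $\Phi_d$ denote the $d$th cyclotomic polynomial and let $\Psi_k : \mathbf{Z}[X]/(X^k-1) \to \bigoplus_{d \mid k} \mathbf{Z}[X]/(\Phi_d(X))$ be the natural map $f \bmod (X^k-1) \mapsto \bigoplus_{d\mid k} f \bmod \Phi_d(X)$. Endow $\mathbf{Z}[X]/(X^k-1)$ with the basis $(1, \overline{X}, \dots, \overline{X}^{k-1})$, each $\mathbf{Z}[X]/(\Phi_d(X))$ with the basis $(1, \overline{X}, \dots, \overline{X}^{\phi(d)-1})$, and order the summands of the direct sum by increasing $d$. $A_k$ is the $k\times k$ integer matrix of $\Psi_k$ with respect to these bases (the $j$th column is the coordinate vector of $\Psi_k(\overline{X}^{j})$). For an integer matrix $A$, $S(A)$ denotes its Smith normal form, with all elementary divisors taken non-negative. *)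

theory Defs
  imports Complex_Main "Jordan_Normal_Form.Matrix"
    "HOL-Computational_Algebra.Polynomial" "HOL-Number_Theory.Totient"
begin

definition cyclo_complex :: "nat \<Rightarrow> complex poly" where
  "cyclo_complex d = (\<Prod>k\<in>{k. k < d \<and> coprime k d}. [:- cis (2 * pi * real k / real d), 1:])"

definition cyclotomic :: "nat \<Rightarrow> int poly" where
  "cyclotomic d = (THE p. map_poly of_int p = cyclo_complex d)"

text \<open>The canonical representative of X^j in Z[X]/(Phi_d) with respect to the basis
  1, X, ..., X^(phi(d)-1): the unique integer polynomial of degree below deg Phi_d
  congruent to X^j modulo Phi_d.\<close>
definition xpow_mod :: "nat \<Rightarrow> nat \<Rightarrow> int poly" where
  "xpow_mod d j = (THE r. degree r < degree (cyclotomic d) \<and> cyclotomic d dvd (Polynomial.monom 1 j - r))"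

definition A_rows :: "nat \<Rightarrow> (nat \<times> nat) list" where
  "A_rows k = concat (map (\<lambda>d. map (\<lambda>i. (d, i)) [0..<totient d]) (sorted_list_of_set {d. d dvd k}))"

text \<open>The k x k matrix A_k of Psi_k; column j is the coordinate vector of Psi_k(X^j).\<close>
definition A_mat :: "nat \<Rightarrow> int mat" where
  "A_mat k = mat k k (\<lambda>(r, c). case A_rows k ! r of (d, i) \<Rightarrow> coeff (xpow_mod d c) i)"

definition kron :: "'a :: times mat \<Rightarrow> 'a mat \<Rightarrow> 'a mat" where
  "kron A B = mat (dim_row A * dim_row B) (dim_col A * dim_col B)
     (\<lambda>(i, j). A $$ (i div dim_row B, j div dim_col B) * B $$ (i mod dim_row B, j mod dim_col B))"

definition is_smith_form :: "int mat \<Rightarrow> bool" where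
  "is_smith_form D \<longleftrightarrow>
     (\<forall>i j. i < dim_row D \<and> j < dim_col D \<and> i \<noteq> j \<longrightarrow> D $$ (i, j) = 0) \<and>
     (\<forall>i. i < min (dim_row D) (dim_col D) \<longrightarrow> D $$ (i, i) \<ge> 0) \<and>
     (\<forall>i. Suc i < min (dim_row D) (dim_col D) \<longrightarrow> D $$ (i, i) dvd D $$ (Suc i, Suc i))"

definition smith_normal_form :: "int mat \<Rightarrow> int mat" where
  "smith_normal_form A = (THE D. D \<in> carrier_mat (dim_row A) (dim_col A) \<and> is_smith_form D \<and>
     (\<exists>P Q. P \<in> carrier_mat (dim_row A) (dim_row A) \<and> invertible_mat P \<and>
            Q \<in> carrier_mat (dim_col A) (dim_col A) \<and> invertible_mat Q \<and> D = P * A * Q))"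

end

theory Submission
  imports Defs "Jordan_Normal_Form.Determinant" "Jordan_Normal_Form.Char_Poly" "HOL-Number_Theory.Cong"
begin


definition Zr :: "nat \<Rightarrow> nat \<Rightarrow> complex" where
  "Zr d k = cis (2 * pi * real k / real d)"

definition prim :: "nat \<Rightarrow> complex set" where
  "prim d = Zr d ` {k. k < d \<and> coprime k d}"

lemma Zr_pow: "Zr d k = Zr d 1 ^ k"
  unfolding Zr_def by (simp add: DeMoivre mult_ac)

lemma Zr1_pow_d: "d > 0 \<Longrightarrow> Zr d 1 ^ d = 1"
proof -
  assume "d > 0"
  have "Zr d 1 ^ d = cis (2 * pi)" unfolding Zr_def using \<open>d>0\<close> by (simp add: DeMoivre)
  also have "\<dots> = 1" by (simp add: complex_eq_iff)
  finally show ?thesis .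
qed

lemma pow_mod_root: assumes "(w::complex) ^ d = 1" shows "w ^ j = w ^ (j mod d)"
proof -
  have "w ^ j = w ^ (d * (j div d) + j mod d)" by simp
  also have "\<dots> = (w ^ d) ^ (j div d) * w ^ (j mod d)" by (metis power_add power_mult)
  finally show ?thesis using assms by simp
qed

lemma Zr_mod: "d > 0 \<Longrightarrow> Zr d k = Zr d (k mod d)"
  by (metis Zr1_pow_d Zr_pow pow_mod_root)

lemma prim_pow_d: "d > 0 \<Longrightarrow> z \<in> prim d \<Longrightarrow> z ^ d = 1"
proof -
  assume d: "d > 0" and "z \<in> prim d"
  then obtain k where "z = Zr d k" unfolding prim_def by auto
  then have "z ^ d = (Zr d 1 ^ d) ^ k" by (metis Zr_pow power_mult mult.commute)
  then show ?thesis using Zr1_pow_d[OF d] by simp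
qed

lemma prim_pow: "d > 0 \<Longrightarrow> z \<in> prim d \<Longrightarrow> z ^ j = z ^ (j mod d)"
  using prim_pow_d pow_mod_root by blast

lemma Zr_inj: "d > 0 \<Longrightarrow> inj_on (Zr d) {..<d}"
  using bij_betw_imp_inj_on[OF bij_betw_roots_unity[of d]] unfolding Zr_def by simp

lemma card_prim_coprime: "d > 0 \<Longrightarrow> card (prim d) = card {k. k < d \<and> coprime k d}"
  unfolding prim_def by (rule card_image, rule inj_on_subset[OF Zr_inj]) auto

lemma card_coprime_totient: assumes "d > 0" shows "card {k. k < d \<and> coprime k d} = totient d"
proof (cases "d = 1")
  case True
  then have "{k. k < d \<and> coprime k d} = {0}" by auto
  then show ?thesis using True by simp
next
  case False
  with assms have "d > 1" by simp
  have "\<And>k. k \<in> {k. k < d \<and> coprime k d} \<longleftrightarrow> k \<in> totatives d"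
  proof -
    fix k
    show "k \<in> {k. k < d \<and> coprime k d} \<longleftrightarrow> k \<in> totatives d"
    proof
      assume "k \<in> {k. k < d \<and> coprime k d}"
      then have "k < d" "coprime k d" by auto
      moreover have "k > 0" using \<open>coprime k d\<close> \<open>d>1\<close> by (cases k) auto
      ultimately show "k \<in> totatives d" by (simp add: in_totatives_iff)
    next
      assume "k \<in> totatives d"
      then have "k \<le> d" "coprime k d" by (auto simp: in_totatives_iff)
      moreover have "k \<noteq> d" using \<open>coprime k d\<close> \<open>d>1\<close> by auto
      ultimately show "k \<in> {k. k < d \<and> coprime k d}" by simp
    qed
  qed
  then have "{k. k < d \<and> coprime k d} = totatives d" by blast
  then show ?thesis by (simp add: totient_def)
qed

lemma card_prim: "d > 0 \<Longrightarrow> card (prim d) = totient d"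
  using card_prim_coprime card_coprime_totient by simp

lemma finite_prim: "finite (prim d)"
  unfolding prim_def by auto

lemma prim_mult:
  assumes d1: "d1 > 0" and d2: "d2 > 0" and cop: "coprime d1 d2"
    and z1: "z1 \<in> prim d1" and z2: "z2 \<in> prim d2"
  shows "z1 * z2 \<in> prim (d1 * d2)"
proof -
  obtain k1 where k1: "k1 < d1" "coprime k1 d1" "z1 = Zr d1 k1" using z1 unfolding prim_def by auto
  obtain k2 where k2: "k2 < d2" "coprime k2 d2" "z2 = Zr d2 k2" using z2 unfolding prim_def by auto
  let ?d = "d1 * d2"
  let ?w = "Zr ?d 1"
  have a: "Zr d1 1 = ?w ^ d2" unfolding Zr_def using d2 by (simp add: DeMoivre)
  have b: "Zr d2 1 = ?w ^ d1" unfolding Zr_def using d1 by (simp add: DeMoivre)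
  define N where "N = k1 * d2 + k2 * d1"
  have e1: "z1 = ?w ^ (d2 * k1)" unfolding k1(3) by (subst Zr_pow) (simp only: a power_mult)
  have e2: "z2 = ?w ^ (d1 * k2)" unfolding k2(3) by (subst Zr_pow) (simp only: b power_mult)
  have "z1 * z2 = ?w ^ N"
    unfolding N_def e1 e2 by (simp add: power_add mult.commute)
  also have "\<dots> = Zr ?d N" by (rule Zr_pow[symmetric])
  also have "\<dots> = Zr ?d (N mod ?d)" using d1 d2 by (intro Zr_mod) simp
  finally have eq: "z1 * z2 = Zr ?d (N mod ?d)" .
  have g1: "gcd N d1 = gcd (k1 * d2) d1" unfolding N_def
    by (metis gcd_add_mult gcd.commute add.commute)
  have "coprime (k1 * d2) d1" using k1(2) cop by (simp add: coprime_commute)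
  then have c1: "coprime N d1" using g1 by (simp add: coprime_iff_gcd_eq_1)
  have g2: "gcd N d2 = gcd (k2 * d1) d2" unfolding N_def
    by (metis gcd_add_mult gcd.commute)
  have "coprime (k2 * d1) d2" using k2(2) cop by (simp add: coprime_commute)
  then have c2: "coprime N d2" using g2 by (simp add: coprime_iff_gcd_eq_1)
  have "coprime N ?d" using c1 c2 by simp
  then have "coprime (N mod ?d) ?d" using d1 d2 coprime_mod_left_iff nat_0_less_mult_iff by blast
  moreover have "N mod ?d < ?d" using d1 d2 by simp
  ultimately show ?thesis unfolding prim_def eq by auto
qed

lemma poly_zero_many_roots:
  fixes q :: "complex poly"
  assumes "finite S" "\<And>z. z \<in> S \<Longrightarrow> poly q z = 0" "degree q < card S"
  shows "q = 0"
proof (rule ccontr)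
  assume "q \<noteq> 0"
  have "card S \<le> card {x. poly q x = 0}"
    by (rule card_mono[OF poly_roots_finite[OF \<open>q\<noteq>0\<close>]]) (use assms in auto)
  also have "\<dots> \<le> degree q" by (rule card_poly_roots_bound[OF \<open>q\<noteq>0\<close>])
  finally show False using assms by simp
qed



abbreviation lin :: "complex \<Rightarrow> complex poly" where "lin a \<equiv> [:- a, 1:]"

lemma cyclo_complex_Zr: "cyclo_complex d = (\<Prod>k\<in>{k. k < d \<and> coprime k d}. lin (Zr d k))"
  unfolding cyclo_complex_def Zr_def by simp

lemma Xd_prod:
  assumes d: "d > 0"
  shows "(\<Prod>k\<in>{..<d}. lin (Zr d k)) = monom 1 d - 1"
proof -
  define p where "p = (\<Prod>k\<in>{..<d}. lin (Zr d k))"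
  have degp: "degree p = d" unfolding p_def by (subst degree_prod_sum_eq) auto
  have lcp: "lead_coeff p = 1" unfolding p_def by (simp add: lead_coeff_prod)
  define q where "q = p - (monom 1 d - 1)"
  have "\<forall>i>d - 1. coeff q i = 0"
  proof (intro allI impI)
    fix i assume "i > d - 1"
    then have "i \<ge> d" by simp
    show "coeff q i = 0"
    proof (cases "i = d")
      case True
      then show ?thesis using lcp degp d unfolding q_def by (simp add: coeff_monom)
    next
      case False
      then have "i > degree p" using \<open>i \<ge> d\<close> degp by simp
      then show ?thesis using \<open>i \<ge> d\<close> False d unfolding q_def by (simp add: coeff_eq_0 coeff_monom)
    qed
  qed
  then have "degree q \<le> d - 1" by (rule degree_le)
  have "q = 0"
  proof (rule poly_zero_many_roots[of "Zr d ` {..<d}"])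
    show "finite (Zr d ` {..<d})" by simp
    show "degree q < card (Zr d ` {..<d})"
      using \<open>degree q \<le> d - 1\<close> d by (simp add: card_image[OF Zr_inj[OF d]])
    fix z assume "z \<in> Zr d ` {..<d}"
    then obtain k where k: "k < d" "z = Zr d k" by auto
    have "poly p z = 0" unfolding p_def poly_prod using k
      by (subst prod_zero_iff) auto
    moreover have "z ^ d = 1" using k by (metis Zr_pow Zr1_pow_d d power_mult mult.commute power_one)
    ultimately show "poly q z = 0" unfolding q_def by (simp add: poly_monom)
  qed
  then show ?thesis unfolding q_def p_def by simp
qed

lemma divisor_regroup:
  assumes d: "d > 0"
  shows "(\<Prod>e\<in>{e. e dvd d}. \<Prod>k\<in>{k. k < e \<and> coprime k e}. lin (Zr e k)) = (\<Prod>k\<in>{..<d}. lin (Zr d k))"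
proof -
  have fin: "finite {e. e dvd d}" using d by simp
  have "(\<Prod>e\<in>{e. e dvd d}. \<Prod>k\<in>{k. k < e \<and> coprime k e}. lin (Zr e k))
       = (\<Prod>(e,k)\<in>Sigma {e. e dvd d} (\<lambda>e. {k. k < e \<and> coprime k e}). lin (Zr e k))"
    by (rule prod.Sigma) (use fin in auto)
  also have "\<dots> = (\<Prod>k\<in>{..<d}. lin (Zr d k))"
  proof (rule prod.reindex_bij_witness[where j = "\<lambda>(e,k). k * (d div e)"
         and i = "\<lambda>j. (d div gcd j d, j div gcd j d)"])
    fix a assume a: "a \<in> Sigma {e. e dvd d} (\<lambda>e. {k. k < e \<and> coprime k e})"
    obtain e k where ek: "a = (e,k)" "e dvd d" "k < e" "coprime k e" using a by auto
    define q where "q = d div e"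
    have dq: "d = e * q" using ek(2) unfolding q_def by simp
    have qpos: "q > 0" using d dq by (cases q) auto
    have epos: "e > 0" using d dq by (cases e) auto
    have g: "gcd (k * q) d = q" unfolding dq using ek(4)
      by (metis coprime_imp_gcd_eq_1 gcd_mult_distrib_nat mult.commute mult.right_neutral)
    show "(\<lambda>j. (d div gcd j d, j div gcd j d)) ((\<lambda>(e, k). k * (d div e)) a) = a"
      using g qpos epos dq ek(1) by (simp add: q_def[symmetric])
    show "(\<lambda>(e, k). k * (d div e)) a \<in> {..<d}"
      using ek qpos dq by (simp add: q_def[symmetric])
    show "lin (Zr d ((\<lambda>(e, k). k * (d div e)) a)) = (case a of (e, k) \<Rightarrow> lin (Zr e k))"
    proof -
      have "real (k * q) / real d = real k / real e"
        using dq qpos by (simp add: field_simps)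
      then have "Zr d (k * q) = Zr e k" unfolding Zr_def
        by (metis times_divide_eq_right)
      then show ?thesis using ek(1) by (simp add: q_def[symmetric])
    qed
  next
    fix b assume b: "b \<in> {..<d}"
    define g where "g = gcd b d"
    have gpos: "g > 0" using d unfolding g_def by simp
    have gd: "g dvd d" "g dvd b" unfolding g_def by auto
    show "(\<lambda>(e, k). k * (d div e)) ((\<lambda>j. (d div gcd j d, j div gcd j d)) b) = b"
      using gd gpos d by (simp add: g_def[symmetric] div_div_eq_right)
    have "b div g < d div g" using b gd gpos
      by (metis dvd_div_mult_self mult_less_cancel2 lessThan_iff)
    moreover have "coprime (b div g) (d div g)" unfolding g_def
      by (rule div_gcd_coprime) (use d in simp)
    moreover have "d div g dvd d" using gd by (metis dvd_div_mult_self dvd_triv_left)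
    ultimately show "(\<lambda>j. (d div gcd j d, j div gcd j d)) b \<in> Sigma {e. e dvd d} (\<lambda>e. {k. k < e \<and> coprime k e})"
      by (simp add: g_def[symmetric])
  qed
  finally show ?thesis .
qed

lemma prod_cyclo_complex:
  assumes "d > 0"
  shows "(\<Prod>e\<in>{e. e dvd d}. cyclo_complex e) = monom 1 d - 1"
  using divisor_regroup[OF assms] Xd_prod[OF assms] by (simp add: cyclo_complex_Zr)

lemma lead_coeff_cyclo_complex: "lead_coeff (cyclo_complex d) = 1"
  unfolding cyclo_complex_def by (simp add: lead_coeff_prod)

lemma degree_cyclo_complex: "degree (cyclo_complex d) = card {k. k < d \<and> coprime k d}"
  unfolding cyclo_complex_def by (subst degree_prod_sum_eq) auto



lemma cyclo_int_ex: "d > 0 \<Longrightarrow> \<exists>p. of_int_poly p = cyclo_complex d"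
proof (induction d rule: less_induct)
  case (less d)
  define E where "E = {e. e dvd d \<and> e < d}"
  have finE: "finite E" unfolding E_def by simp
  have "\<forall>e\<in>E. \<exists>p. of_int_poly p = cyclo_complex e"
  proof
    fix e assume "e \<in> E"
    then have "e < d" "e > 0" using less.prems unfolding E_def by (auto intro: dvd_pos_nat)
    then show "\<exists>p. of_int_poly p = cyclo_complex e" using less.IH by blast
  qed
  then obtain f where f: "\<And>e. e \<in> E \<Longrightarrow> of_int_poly (f e) = cyclo_complex e" by metis
  define G where "G = (\<Prod>e\<in>E. f e)"
  have mapG: "of_int_poly G = (\<Prod>e\<in>E. cyclo_complex e)"
    unfolding G_def of_int_poly_hom.hom_prod using f by simp
  have lcG: "lead_coeff G = 1"
  proof -
    have "of_int (lead_coeff G) = (lead_coeff (of_int_poly G) :: complex)" by simp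
    also have "\<dots> = 1" unfolding mapG by (simp add: lead_coeff_prod lead_coeff_cyclo_complex)
    finally show ?thesis by simp
  qed
  then have G0: "G \<noteq> 0" by auto
  have split: "{e. e dvd d} = insert d E" "d \<notin> E" unfolding E_def using less.prems by auto
  have key: "cyclo_complex d * of_int_poly G = monom 1 d - 1"
    using prod_cyclo_complex[OF less.prems] unfolding split(1) mapG
    by (simp add: prod.insert[OF finE split(2)])
  obtain q r where qr: "pseudo_divmod (monom 1 d - 1) G = (q, r)" by fastforce
  from pseudo_divmod[OF G0 qr] lcG
  have eq: "monom 1 d - 1 = G * q + r" and rdeg: "r = 0 \<or> degree r < degree G" by auto
  have "of_int_poly (monom 1 d - 1) = (monom 1 d - 1 :: complex poly)" by (simp add: of_int_poly_hom.hom_minus)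
  with eq have "monom 1 d - 1 = of_int_poly G * of_int_poly q + (of_int_poly r :: complex poly)"
    by (metis of_int_poly_hom.hom_add of_int_poly_hom.hom_mult)
  with key have "of_int_poly G * (cyclo_complex d - of_int_poly q) = (of_int_poly r :: complex poly)"
    by (simp add: algebra_simps)
  moreover have "cyclo_complex d - of_int_poly q = 0"
  proof (rule ccontr)
    assume ne: "cyclo_complex d - of_int_poly q \<noteq> 0"
    have nG: "(of_int_poly G :: complex poly) \<noteq> 0" using G0 by simp
    have "degree (of_int_poly G * (cyclo_complex d - of_int_poly q)) \<ge> degree (of_int_poly G :: complex poly)"
      using ne nG by (simp add: degree_mult_eq)
    moreover have "(of_int_poly G * (cyclo_complex d - of_int_poly q)) \<noteq> 0" using ne nG by simp
    ultimately show False using \<open>of_int_poly G * _ = _\<close> rdeg by auto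
  qed
  ultimately show ?case by auto
qed

lemma cyclotomic_map: assumes "d > 0" shows "of_int_poly (cyclotomic d) = cyclo_complex d"
proof -
  obtain p where p: "of_int_poly p = cyclo_complex d" using cyclo_int_ex[OF assms] by blast
  have "cyclotomic d = p" unfolding cyclotomic_def
  proof (rule the_equality)
    show "of_int_poly p = cyclo_complex d" by (rule p)
    fix pa assume "of_int_poly pa = cyclo_complex d"
    then have "(of_int_poly pa :: complex poly) = of_int_poly p" using p by simp
    then show "pa = p" by (rule of_int_poly_hom.injectivity)
  qed
  then show ?thesis using p by simp
qed

lemma degree_cyclotomic: assumes "d > 0" shows "degree (cyclotomic d) = totient d"
proof -
  have "degree (cyclotomic d) = degree (of_int_poly (cyclotomic d) :: complex poly)" by simp
  also have "\<dots> = degree (cyclo_complex d)" using cyclotomic_map[OF assms] by simp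
  also have "\<dots> = totient d" using degree_cyclo_complex[of d] card_coprime_totient[OF assms] by simp
  finally show ?thesis .
qed

lemma lead_coeff_cyclotomic: assumes "d > 0" shows "lead_coeff (cyclotomic d) = 1"
proof -
  have "(of_int (lead_coeff (cyclotomic d)) :: complex) = lead_coeff (of_int_poly (cyclotomic d) :: complex poly)" by simp
  also have "\<dots> = 1" using cyclotomic_map[OF assms] lead_coeff_cyclo_complex[of d] by simp
  finally have "(of_int (lead_coeff (cyclotomic d)) :: complex) = 1" .
  then show ?thesis by (simp only: of_int_eq_1_iff)
qed

lemma cyclotomic_nz: assumes "d > 0" shows "cyclotomic d \<noteq> 0"
proof
  assume "cyclotomic d = 0"
  then have "lead_coeff (cyclotomic d) = 0" by simp
  with lead_coeff_cyclotomic[OF assms] show False by simp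
qed

lemma poly_cyclo_prim: assumes "d > 0" "z \<in> prim d" shows "poly (of_int_poly (cyclotomic d)) z = 0"
proof -
  obtain k where k: "k < d" "coprime k d" "z = Zr d k" using assms(2) unfolding prim_def by auto
  show ?thesis unfolding cyclotomic_map[OF assms(1)] cyclo_complex_Zr poly_prod using k
    by (subst prod_zero_iff) auto
qed



lemma xpow_unique:
  assumes d: "d > 0"
    and r1: "degree r1 < degree (cyclotomic d)" "cyclotomic d dvd (monom 1 j - r1)"
    and r2: "degree r2 < degree (cyclotomic d)" "cyclotomic d dvd (monom 1 j - r2)"
  shows "r1 = r2"
proof (rule ccontr)
  assume ne: "r1 \<noteq> r2"
  have "cyclotomic d dvd (monom 1 j - r2) - (monom 1 j - r1)" by (rule dvd_diff[OF r2(2) r1(2)])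
  then have "cyclotomic d dvd r1 - r2" by simp
  then have "degree (cyclotomic d) \<le> degree (r1 - r2)" using ne by (intro dvd_imp_degree_le) auto
  moreover have "degree (r1 - r2) \<le> max (degree r1) (degree r2)" by (rule degree_diff_le_max)
  ultimately show False using r1 r2 by simp
qed

lemma xpow_exists:
  assumes d: "d > 0"
  shows "\<exists>r. degree r < degree (cyclotomic d) \<and> cyclotomic d dvd (monom 1 j - r)"
proof -
  let ?P = "cyclotomic d"
  obtain q r where qr: "pseudo_divmod (monom 1 j) ?P = (q, r)" by fastforce
  from pseudo_divmod[OF cyclotomic_nz[OF d] qr] lead_coeff_cyclotomic[OF d]
  have eq: "monom 1 j = ?P * q + r" and rdeg: "r = 0 \<or> degree r < degree ?P" by auto
  have "degree ?P > 0" using degree_cyclotomic[OF d] d by simp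
  then have "degree r < degree ?P" using rdeg by auto
  moreover have "?P dvd (monom 1 j - r)" using eq by (metis add_diff_cancel_right' dvd_triv_left)
  ultimately show ?thesis by blast
qed

lemma xpow_mod_props:
  assumes d: "d > 0"
  shows "degree (xpow_mod d j) < totient d" "cyclotomic d dvd (monom 1 j - xpow_mod d j)"
proof -
  have "degree (xpow_mod d j) < degree (cyclotomic d) \<and> cyclotomic d dvd (monom 1 j - xpow_mod d j)"
    unfolding xpow_mod_def
    by (rule theI'[of "\<lambda>r. degree r < degree (cyclotomic d) \<and> cyclotomic d dvd (monom 1 j - r)"])
       (use xpow_exists[OF d] xpow_unique[OF d] in blast)
  then show "degree (xpow_mod d j) < totient d" "cyclotomic d dvd (monom 1 j - xpow_mod d j)"
    using degree_cyclotomic[OF d] by auto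
qed

lemma xpow_small: assumes d: "d > 0" and j: "j < totient d" shows "xpow_mod d j = monom 1 j"
  unfolding xpow_mod_def
proof (rule the_equality)
  show "degree (monom (1::int) j) < degree (cyclotomic d) \<and> cyclotomic d dvd (monom 1 j - monom 1 j)"
    using j degree_cyclotomic[OF d] by (simp add: degree_monom_eq)
  fix r assume "degree r < degree (cyclotomic d) \<and> cyclotomic d dvd (monom 1 j - r)"
  then show "r = monom 1 j"
    using xpow_unique[OF d, of r j "monom 1 j"] j degree_cyclotomic[OF d] by (auto simp: degree_monom_eq)
qed

lemma coeff_xpow_small: "d > 0 \<Longrightarrow> j < totient d \<Longrightarrow> coeff (xpow_mod d j) i = (if i = j then 1 else 0)"
  by (simp add: xpow_small coeff_monom)

lemma coeff_xpow_big: "d > 0 \<Longrightarrow> totient d \<le> i \<Longrightarrow> coeff (xpow_mod d j) i = 0"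
  using xpow_mod_props(1)[of d j] by (intro coeff_eq_0) auto

lemma poly_xpow: assumes d: "d > 0" and z: "z \<in> prim d"
  shows "poly (of_int_poly (xpow_mod d j)) z = z ^ j"
proof -
  obtain h where h: "monom 1 j - xpow_mod d j = cyclotomic d * h"
    using xpow_mod_props(2)[OF d, of j] by (auto elim: dvdE)
  have "(of_int_poly (monom 1 j - xpow_mod d j) :: complex poly) = of_int_poly (cyclotomic d) * of_int_poly h"
    unfolding h by (simp add: of_int_poly_hom.hom_mult)
  then have "poly (of_int_poly (monom 1 j - xpow_mod d j) :: complex poly) z = 0"
    using poly_cyclo_prim[OF d z] by simp
  then show ?thesis by (simp add: of_int_poly_hom.hom_minus poly_monom)
qed

lemma poly_sum_lt:
  fixes p :: "'a::comm_semiring_1 poly"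
  assumes "degree p < N" shows "poly p z = (\<Sum>i<N. coeff p i * z ^ i)"
proof -
  have "poly p z = (\<Sum>i\<le>degree p. coeff p i * z ^ i)" by (rule poly_altdef)
  also have "\<dots> = (\<Sum>i<N. coeff p i * z ^ i)"
    by (rule sum.mono_neutral_left) (use assms in \<open>auto simp: coeff_eq_0\<close>)
  finally show ?thesis .
qed

lemma sum_xpow: assumes d: "d > 0" and z: "z \<in> prim d"
  shows "(\<Sum>i<totient d. of_int (coeff (xpow_mod d j) i) * z ^ i) = z ^ j"
proof -
  have "poly (of_int_poly (xpow_mod d j)) z = (\<Sum>i<totient d. coeff (of_int_poly (xpow_mod d j)) i * z ^ i)"
    by (rule poly_sum_lt) (use xpow_mod_props(1)[OF d] in simp)
  then show ?thesis using poly_xpow[OF d z] by simp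
qed

lemma U1:
  assumes d: "d > 0" and h: "\<And>z. z \<in> prim d \<Longrightarrow> (\<Sum>i<totient d. g i * z ^ i) = (0::complex)"
    and i: "i < totient d"
  shows "g i = 0"
proof -
  define q where "q = (\<Sum>k<totient d. monom (g k) k)"
  have "q = 0"
  proof (rule poly_zero_many_roots[of "prim d"])
    show "finite (prim d)" by (rule finite_prim)
    show "degree q < card (prim d)" unfolding card_prim[OF d] q_def
      by (rule degree_sum_less) (use d in \<open>auto intro: le_less_trans[OF degree_monom_le]\<close>)
    fix z assume "z \<in> prim d"
    then show "poly q z = 0" unfolding q_def using h by (simp add: poly_sum poly_monom)
  qed
  then have "coeff q i = 0" by simp
  then show ?thesis unfolding q_def using i by (simp add: coeff_sum coeff_monom)
qed

lemma U2:
  assumes d1: "d1 > 0" and d2: "d2 > 0"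
    and h: "\<And>z1 z2. z1 \<in> prim d1 \<Longrightarrow> z2 \<in> prim d2 \<Longrightarrow>
        (\<Sum>i1<totient d1. \<Sum>i2<totient d2. F i1 i2 * z1 ^ i1 * z2 ^ i2) = (0::complex)"
    and i1: "i1 < totient d1" and i2: "i2 < totient d2"
  shows "F i1 i2 = 0"
proof -
  have "\<And>z2. z2 \<in> prim d2 \<Longrightarrow> (\<Sum>k<totient d2. F i1 k * z2 ^ k) = 0"
  proof -
    fix z2 assume z2: "z2 \<in> prim d2"
    show "(\<Sum>k<totient d2. F i1 k * z2 ^ k) = 0"
    proof (rule U1[OF d1 _ i1, where g = "\<lambda>j. \<Sum>k<totient d2. F j k * z2 ^ k"])
      fix z1 assume z1: "z1 \<in> prim d1"
      have "(\<Sum>j<totient d1. (\<Sum>k<totient d2. F j k * z2 ^ k) * z1 ^ j)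
          = (\<Sum>j<totient d1. \<Sum>k<totient d2. F j k * z1 ^ j * z2 ^ k)"
        unfolding sum_distrib_right by (simp add: mult_ac)
      also have "\<dots> = 0" using h[OF z1 z2] .
      finally show "(\<Sum>j<totient d1. (\<Sum>k<totient d2. F j k * z2 ^ k) * z1 ^ j) = 0" .
    qed
  qed
  then show ?thesis by (rule U1[OF d2 _ i2, where g = "F i1"])
qed

lemma sum3:
  fixes A :: "nat \<Rightarrow> 'a::comm_semiring_1"
  shows "(\<Sum>i1\<in>I1. \<Sum>i2\<in>I2. (\<Sum>i\<in>I. B i i1 * C i i2 * A i) * x i1 * y i2)
       = (\<Sum>i\<in>I. A i * (\<Sum>i1\<in>I1. B i i1 * x i1) * (\<Sum>i2\<in>I2. C i i2 * y i2))"
proof -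
  have "(\<Sum>i1\<in>I1. \<Sum>i2\<in>I2. (\<Sum>i\<in>I. B i i1 * C i i2 * A i) * x i1 * y i2)
      = (\<Sum>i1\<in>I1. \<Sum>i2\<in>I2. \<Sum>i\<in>I. A i * (B i i1 * x i1) * (C i i2 * y i2))"
    unfolding sum_distrib_right by (simp add: mult_ac)
  also have "\<dots> = (\<Sum>i1\<in>I1. \<Sum>i\<in>I. \<Sum>i2\<in>I2. A i * (B i i1 * x i1) * (C i i2 * y i2))"
    by (simp add: sum.swap[of _ I2])
  also have "\<dots> = (\<Sum>i\<in>I. \<Sum>i1\<in>I1. \<Sum>i2\<in>I2. A i * (B i i1 * x i1) * (C i i2 * y i2))"
    by (rule sum.swap)
  also have "\<dots> = (\<Sum>i\<in>I. A i * (\<Sum>i1\<in>I1. B i i1 * x i1) * (\<Sum>i2\<in>I2. C i i2 * y i2))"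
  proof (rule sum.cong[OF refl])
    fix i
    have "A i * (\<Sum>i1\<in>I1. B i i1 * x i1) * (\<Sum>i2\<in>I2. C i i2 * y i2)
        = A i * (\<Sum>i1\<in>I1. \<Sum>i2\<in>I2. (B i i1 * x i1) * (C i i2 * y i2))"
      by (simp only: mult.assoc[of "A i"] sum_product)
    also have "\<dots> = (\<Sum>i1\<in>I1. \<Sum>i2\<in>I2. A i * (B i i1 * x i1) * (C i i2 * y i2))"
      by (simp add: sum_distrib_left mult.assoc)
    finally show "(\<Sum>i1\<in>I1. \<Sum>i2\<in>I2. A i * (B i i1 * x i1) * (C i i2 * y i2))
        = A i * (\<Sum>i1\<in>I1. B i i1 * x i1) * (\<Sum>i2\<in>I2. C i i2 * y i2)" by simp
  qed
  finally show ?thesis .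
qed

lemma KI:
  assumes d1: "d1 > 0" and d2: "d2 > 0" and cop: "coprime d1 d2"
    and i1: "i1 < totient d1" and i2: "i2 < totient d2"
  shows "(\<Sum>i<totient (d1 * d2). coeff (xpow_mod d1 i) i1 * coeff (xpow_mod d2 i) i2 * coeff (xpow_mod (d1 * d2) c) i)
       = coeff (xpow_mod d1 c) i1 * coeff (xpow_mod d2 c) i2"
proof -
  define L where "L = (\<lambda>i1 i2. (\<Sum>i<totient (d1 * d2). coeff (xpow_mod d1 i) i1 * coeff (xpow_mod d2 i) i2 * coeff (xpow_mod (d1 * d2) c) i))"
  define R where "R = (\<lambda>i1 i2. coeff (xpow_mod d1 c) i1 * coeff (xpow_mod d2 c) i2)"
  have d: "d1 * d2 > 0" using d1 d2 by simp
  have "of_int (L i1 i2 - R i1 i2) = (0::complex)"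
  proof (rule U2[OF d1 d2 _ i1 i2, where F = "\<lambda>a b. of_int (L a b - R a b)"])
    fix z1 z2 assume z1: "z1 \<in> prim d1" and z2: "z2 \<in> prim d2"
    have zz: "z1 * z2 \<in> prim (d1 * d2)" by (rule prim_mult[OF d1 d2 cop z1 z2])
    have "(\<Sum>a<totient d1. \<Sum>b<totient d2. (of_int (L a b) :: complex) * z1 ^ a * z2 ^ b)
        = (\<Sum>i<totient (d1 * d2). of_int (coeff (xpow_mod (d1 * d2) c) i) *
             (\<Sum>a<totient d1. of_int (coeff (xpow_mod d1 i) a) * z1 ^ a) *
             (\<Sum>b<totient d2. of_int (coeff (xpow_mod d2 i) b) * z2 ^ b))"
      unfolding L_def of_int_sum of_int_mult
      by (rule sum3[where A = "\<lambda>i. of_int (coeff (xpow_mod (d1 * d2) c) i)"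
            and B = "\<lambda>i a. of_int (coeff (xpow_mod d1 i) a)" and C = "\<lambda>i b. of_int (coeff (xpow_mod d2 i) b)"
            and x = "\<lambda>a. z1 ^ a" and y = "\<lambda>b. z2 ^ b"])
    also have "\<dots> = (\<Sum>i<totient (d1 * d2). of_int (coeff (xpow_mod (d1 * d2) c) i) * (z1 * z2) ^ i)"
      by (simp add: sum_xpow[OF d1 z1] sum_xpow[OF d2 z2] power_mult_distrib mult.assoc)
    also have "\<dots> = (z1 * z2) ^ c" by (rule sum_xpow[OF d zz])
    finally have LL: "(\<Sum>a<totient d1. \<Sum>b<totient d2. (of_int (L a b) :: complex) * z1 ^ a * z2 ^ b) = (z1 * z2) ^ c" .
    have "(\<Sum>a<totient d1. \<Sum>b<totient d2. (of_int (R a b) :: complex) * z1 ^ a * z2 ^ b)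
        = (\<Sum>a<totient d1. of_int (coeff (xpow_mod d1 c) a) * z1 ^ a) * (\<Sum>b<totient d2. of_int (coeff (xpow_mod d2 c) b) * z2 ^ b)"
      unfolding R_def sum_product by (intro sum.cong refl) (simp add: mult_ac)
    also have "\<dots> = z1 ^ c * z2 ^ c" by (simp add: sum_xpow[OF d1 z1] sum_xpow[OF d2 z2])
    finally have RR: "(\<Sum>a<totient d1. \<Sum>b<totient d2. (of_int (R a b) :: complex) * z1 ^ a * z2 ^ b) = z1 ^ c * z2 ^ c" .
    have "(\<Sum>a<totient d1. \<Sum>b<totient d2. (of_int (L a b - R a b) :: complex) * z1 ^ a * z2 ^ b)
        = (\<Sum>a<totient d1. \<Sum>b<totient d2. (of_int (L a b) :: complex) * z1 ^ a * z2 ^ b)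
          - (\<Sum>a<totient d1. \<Sum>b<totient d2. (of_int (R a b) :: complex) * z1 ^ a * z2 ^ b)"
      by (simp add: sum_subtractf left_diff_distrib)
    also have "\<dots> = 0" using LL RR by (simp add: power_mult_distrib)
    finally show "(\<Sum>a<totient d1. \<Sum>b<totient d2. (of_int (L a b - R a b) :: complex) * z1 ^ a * z2 ^ b) = 0" .
  qed
  then have "L i1 i2 - R i1 i2 = 0" by (simp only: of_int_eq_0_iff)
  then show ?thesis by (simp add: L_def R_def)
qed



lemma xpow_cong:
  assumes d: "d > 0" and jj: "j mod d = j' mod d"
  shows "xpow_mod d j = xpow_mod d j'"
proof (rule poly_eqI)
  fix i
  show "coeff (xpow_mod d j) i = coeff (xpow_mod d j') i"
  proof (cases "i < totient d")
    case False
    then show ?thesis using coeff_xpow_big[OF d] by simp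
  next
    case True
    have "(of_int (coeff (xpow_mod d j) i - coeff (xpow_mod d j') i) :: complex) = 0"
    proof (rule U1[OF d _ True, where g = "\<lambda>i. of_int (coeff (xpow_mod d j) i - coeff (xpow_mod d j') i)"])
      fix z assume z: "z \<in> prim d"
      have "(\<Sum>i<totient d. (of_int (coeff (xpow_mod d j) i - coeff (xpow_mod d j') i) :: complex) * z ^ i)
          = (\<Sum>i<totient d. of_int (coeff (xpow_mod d j) i) * z ^ i) - (\<Sum>i<totient d. of_int (coeff (xpow_mod d j') i) * z ^ i)"
        by (simp add: sum_subtractf left_diff_distrib)
      also have "\<dots> = z ^ j - z ^ j'" by (simp add: sum_xpow[OF d z])
      also have "\<dots> = 0" using prim_pow[OF d z, of j] prim_pow[OF d z, of j'] jj by simp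
      finally show "(\<Sum>i<totient d. (of_int (coeff (xpow_mod d j) i - coeff (xpow_mod d j') i) :: complex) * z ^ i) = 0" .
    qed
    then show ?thesis by (simp only: of_int_eq_0_iff)
  qed
qed

lemma A_rows_set: assumes "k > 0"
  shows "set (A_rows k) = (SIGMA d:{d. d dvd k}. {..<totient d})"
  unfolding A_rows_def using assms by auto

lemma A_rows_length: assumes "k > 0" shows "length (A_rows k) = k"
proof -
  have fin: "finite {d. d dvd k}" using assms by simp
  have "length (A_rows k) = sum_list (map totient (sorted_list_of_set {d. d dvd k}))"
    unfolding A_rows_def length_concat by (simp add: o_def)
  also have "\<dots> = sum totient {d. d dvd k}"
    by (subst sum_list_distinct_conv_sum_set) (use fin in auto)
  also have "\<dots> = k" by (rule totient_divisor_sum)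
  finally show ?thesis .
qed

lemma A_rows_distinct: assumes "k > 0" shows "distinct (A_rows k)"
proof (rule card_distinct)
  have fin: "finite {d. d dvd k}" using assms by simp
  have "card (set (A_rows k)) = (\<Sum>d\<in>{d. d dvd k}. card {..<totient d})"
    unfolding A_rows_set[OF assms] by (rule card_SigmaI) (use fin in auto)
  also have "\<dots> = k" using totient_divisor_sum[of k] by simp
  finally show "card (set (A_rows k)) = length (A_rows k)" using A_rows_length[OF assms] by simp
qed

lemma sum_rows:
  assumes "k > 0"
  shows "(\<Sum>s<k. f (A_rows k ! s)) = (\<Sum>d\<in>{d. d dvd k}. \<Sum>i<totient d. f (d, i))"
proof -
  have fin: "finite {d. d dvd k}" using assms by simp
  have "(\<Sum>s<k. f (A_rows k ! s)) = sum_list (map f (A_rows k))"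
    unfolding sum_list_sum_nth using A_rows_length[OF assms] by (simp add: lessThan_atLeast0)
  also have "\<dots> = sum f (set (A_rows k))"
    by (rule sum_list_distinct_conv_sum_set[OF A_rows_distinct[OF assms]])
  also have "\<dots> = (\<Sum>d\<in>{d. d dvd k}. \<Sum>i<totient d. f (d, i))"
  proof -
    have "(\<Sum>d\<in>{d. d dvd k}. \<Sum>i<totient d. f (d, i)) = (\<Sum>(d,i)\<in>(SIGMA d:{d. d dvd k}. {..<totient d}). f (d, i))"
      by (rule sum.Sigma) (use fin in auto)
    then show ?thesis unfolding A_rows_set[OF assms] by (simp add: case_prod_eta)
  qed
  finally show ?thesis .
qed

lemma A_rows_mem:
  assumes "k > 0" "s < k"
  shows "fst (A_rows k ! s) dvd k" "snd (A_rows k ! s) < totient (fst (A_rows k ! s))"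
    "fst (A_rows k ! s) > 0"
proof -
  have "A_rows k ! s \<in> set (A_rows k)" using assms A_rows_length[OF assms(1)] by simp
  then show "fst (A_rows k ! s) dvd k" "snd (A_rows k ! s) < totient (fst (A_rows k ! s))"
    unfolding A_rows_set[OF assms(1)] by auto
  then show "fst (A_rows k ! s) > 0" using assms(1) by (auto intro: dvd_pos_nat)
qed

lemma A_rows_inj:
  assumes "k > 0" "s < k" "s' < k"
  shows "(A_rows k ! s = A_rows k ! s') = (s = s')"
  using nth_eq_iff_index_eq[OF A_rows_distinct[OF assms(1)]] assms A_rows_length[OF assms(1)] by simp

lemma A_mat_entry:
  assumes "s < k" "c < k"
  shows "A_mat k $$ (s, c) = coeff (xpow_mod (fst (A_rows k ! s)) c) (snd (A_rows k ! s))"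
  unfolding A_mat_def using assms by (simp add: case_prod_beta)

lemma A_mat_carrier: "A_mat k \<in> carrier_mat k k"
  unfolding A_mat_def by simp



lemma mult_entry:
  assumes "A \<in> carrier_mat nr k" "B \<in> carrier_mat k nc" "i < nr" "j < nc"
  shows "(A * B) $$ (i, j) = (\<Sum>l<k. A $$ (i, l) * B $$ (l, j))"
  using assms by (simp add: scalar_prod_def lessThan_atLeast0)

lemma int_inv_comm:
  fixes A B :: "int mat"
  assumes A: "A \<in> carrier_mat k k" and B: "B \<in> carrier_mat k k" and AB: "A * B = 1\<^sub>m k"
  shows "B * A = 1\<^sub>m k"
proof -
  let ?h = "of_int_hom.mat_hom :: int mat \<Rightarrow> rat mat"
  have hA: "?h A \<in> carrier_mat k k" and hB: "?h B \<in> carrier_mat k k" using A B by auto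
  have "?h A * ?h B = ?h (A * B)" using A B by (simp add: of_int_hom.mat_hom_mult)
  also have "\<dots> = 1\<^sub>m k" using AB by (simp add: of_int_hom.mat_hom_one)
  finally have "?h B * ?h A = 1\<^sub>m k" by (rule mat_mult_left_right_inverse[OF hA hB])
  then have h: "?h (B * A) = 1\<^sub>m k" using A B by (simp add: of_int_hom.mat_hom_mult)
  show ?thesis
  proof (rule eq_matI)
    fix i j assume ij: "i < dim_row (1\<^sub>m k)" "j < dim_col (1\<^sub>m k)"
    have "(of_int ((B * A) $$ (i, j)) :: rat) = ?h (B * A) $$ (i, j)" using ij A B by simp
    also have "\<dots> = of_int (1\<^sub>m k $$ (i, j))" unfolding h using ij by simp
    finally show "(B * A) $$ (i, j) = 1\<^sub>m k $$ (i, j)" by (simp only: of_int_eq_iff)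
  qed (use A B in auto)
qed

lemma invertible_by:
  fixes A B :: "int mat"
  assumes A: "A \<in> carrier_mat k k" and B: "B \<in> carrier_mat k k" and AB: "A * B = 1\<^sub>m k"
  shows "invertible_mat A"
  unfolding invertible_mat_def inverts_mat_def
  using A B AB int_inv_comm[OF A B AB] by (auto intro!: exI[of _ B])

lemma invertible_inv:
  fixes A :: "int mat"
  assumes A: "A \<in> carrier_mat k k" and "invertible_mat A"
  obtains B where "B \<in> carrier_mat k k" "A * B = 1\<^sub>m k" "B * A = 1\<^sub>m k"
proof -
  obtain B where B: "A * B = 1\<^sub>m (dim_row A)" "B * A = 1\<^sub>m (dim_row B)"
    using assms(2) unfolding invertible_mat_def inverts_mat_def by blast
  have "dim_col B = k" using B(1) A by (metis index_mult_mat(3) index_one_mat(3) carrier_matD(1))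
  moreover have "dim_row B = k" using B(2) A by (metis index_mult_mat(3) index_one_mat(3) carrier_matD(2))
  ultimately have "B \<in> carrier_mat k k" by auto
  then show ?thesis using that B A by auto
qed

lemma invertible_mult:
  fixes A B :: "int mat"
  assumes A: "A \<in> carrier_mat k k" "invertible_mat A" and B: "B \<in> carrier_mat k k" "invertible_mat B"
  shows "invertible_mat (A * B)"
proof -
  obtain A' where A': "A' \<in> carrier_mat k k" "A * A' = 1\<^sub>m k" using invertible_inv[OF A] by metis
  obtain B' where B': "B' \<in> carrier_mat k k" "B * B' = 1\<^sub>m k" using invertible_inv[OF B] by metis
  have e1: "B * (B' * A') = A'"
  proof -
    have "B * (B' * A') = (B * B') * A'" by (rule assoc_mult_mat[of B k k B' k A' k, symmetric]) (use B A' B' in auto)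
    also have "\<dots> = A'" using B'(2) A'(1) by simp
    finally show ?thesis .
  qed
  have "(A * B) * (B' * A') = A * (B * (B' * A'))"
    using A B A' B' by (intro assoc_mult_mat[of A k k B k "B' * A'" k]) auto
  also have "\<dots> = 1\<^sub>m k" using e1 A'(2) by simp
  finally show ?thesis
    by (rule invertible_by[rotated 2]) (use A B A' B' in auto)
qed



lemma decomp_unique:
  fixes m n d1 d2 e1 e2 :: nat
  assumes cop: "coprime m n" and "d1 dvd m" "e1 dvd m" "d2 dvd n" "e2 dvd n"
    and eq: "d1 * d2 = e1 * e2"
  shows "d1 = e1 \<and> d2 = e2"
proof -
  have c1: "coprime d1 e2" "coprime e1 d2" using assms by (auto intro: coprime_divisors)
  have c2: "coprime d2 e1" "coprime e2 d1" using c1 by (auto simp: coprime_commute)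
  have "d1 dvd e1 * e2" using eq by (metis dvd_triv_left)
  then have a: "d1 dvd e1" using c1(1) by (simp add: coprime_dvd_mult_left_iff)
  have "e1 dvd d1 * d2" using eq by (metis dvd_triv_left)
  then have b: "e1 dvd d1" using c1(2) by (simp add: coprime_dvd_mult_left_iff)
  have "d2 dvd e1 * e2" using eq by (metis dvd_triv_right)
  then have c: "d2 dvd e2" using c2(1) by (simp add: coprime_dvd_mult_right_iff)
  have "e2 dvd d1 * d2" using eq by (metis dvd_triv_right)
  then have d: "e2 dvd d2" using c2(2) by (simp add: coprime_dvd_mult_right_iff)
  show ?thesis using a b c d by (auto intro: dvd_antisym)
qed

lemma lin_mod:
  fixes a b u v m :: nat
  assumes "u mod m = 1 mod m" "v mod m = 0"
  shows "(a * u + b * v) mod m = a mod m"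
proof -
  have "(a * u + b * v) mod m = (a * (u mod m) + b * (v mod m)) mod m"
    by (metis mod_add_eq mod_mult_right_eq)
  also have "\<dots> = (a * (1 mod m)) mod m" using assms by simp
  also have "\<dots> = a mod m" by (metis mod_mult_right_eq mult.right_neutral)
  finally show ?thesis .
qed

locale krs =
  fixes m n u v :: nat
  assumes m: "m > 0" and n: "n > 0" and cop: "coprime m n"
    and u: "u mod m = 1 mod m" "u mod n = 0" and v: "v mod m = 0" "v mod n = 1 mod n"
begin

abbreviation "N \<equiv> m * n"

lemma N: "N > 0" using m n by simp

definition rd1 where "rd1 r = fst (A_rows m ! (r div n))"
definition ri1 where "ri1 r = snd (A_rows m ! (r div n))"
definition rd2 where "rd2 r = fst (A_rows n ! (r mod n))"
definition ri2 where "ri2 r = snd (A_rows n ! (r mod n))"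
definition g where "g c = ((c div n) * u + (c mod n) * v) mod N"

definition Pm :: "int mat" where
  "Pm = mat N N (\<lambda>(r, s). if fst (A_rows N ! s) = rd1 r * rd2 r
      then coeff (xpow_mod (rd1 r) (snd (A_rows N ! s))) (ri1 r) * coeff (xpow_mod (rd2 r) (snd (A_rows N ! s))) (ri2 r)
      else 0)"

definition Pi :: "int mat" where
  "Pi = mat N N (\<lambda>(s, r). if fst (A_rows N ! s) = rd1 r * rd2 r
      then coeff (xpow_mod (fst (A_rows N ! s)) (ri1 r * u + ri2 r * v)) (snd (A_rows N ! s))
      else 0)"

definition Qm :: "int mat" where
  "Qm = mat N N (\<lambda>(c, c'). if c = g c' then 1 else 0)"

lemma carriers: "Pm \<in> carrier_mat N N" "Pi \<in> carrier_mat N N" "Qm \<in> carrier_mat N N"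
  "transpose_mat Qm \<in> carrier_mat N N"
  unfolding Pm_def Pi_def Qm_def by auto

lemma row_facts:
  assumes r: "r < N"
  shows "rd1 r dvd m" "ri1 r < totient (rd1 r)" "rd1 r > 0"
    "rd2 r dvd n" "ri2 r < totient (rd2 r)" "rd2 r > 0"
    "coprime (rd1 r) (rd2 r)" "rd1 r * rd2 r dvd N" "rd1 r * rd2 r > 0"
proof -
  have a: "r div n < m" using r by (simp add: less_mult_imp_div_less)
  have b: "r mod n < n" using n by simp
  show 1: "rd1 r dvd m" "ri1 r < totient (rd1 r)" "rd1 r > 0"
    unfolding rd1_def ri1_def using A_rows_mem[OF m a] by auto
  show 2: "rd2 r dvd n" "ri2 r < totient (rd2 r)" "rd2 r > 0"
    unfolding rd2_def ri2_def using A_rows_mem[OF n b] by auto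
  show "coprime (rd1 r) (rd2 r)" using 1 2 cop by (auto intro: coprime_divisors)
  show "rd1 r * rd2 r dvd N" using 1 2 by (simp add: mult_dvd_mono)
  show "rd1 r * rd2 r > 0" using 1 2 by simp
qed

lemma g_facts:
  assumes c: "c < N"
  shows "g c < N" "g c mod m = c div n" "g c mod n = c mod n"
proof -
  show "g c < N" unfolding g_def using N by simp
  have "g c mod m = ((c div n) * u + (c mod n) * v) mod m"
    unfolding g_def by (simp add: mod_mod_cancel)
  also have "\<dots> = (c div n) mod m" by (rule lin_mod[OF u(1) v(1)])
  also have "\<dots> = c div n" using c by (simp add: less_mult_imp_div_less)
  finally show "g c mod m = c div n" .
  have "g c mod n = ((c mod n) * v + (c div n) * u) mod n"
    unfolding g_def by (simp add: mod_mod_cancel add.commute)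
  also have "\<dots> = (c mod n) mod n" by (rule lin_mod[OF v(2) u(2)])
  also have "\<dots> = c mod n" by simp
  finally show "g c mod n = c mod n" .
qed

lemma g_inj: assumes "c1 < N" "c2 < N" "g c1 = g c2" shows "c1 = c2"
proof -
  have "c1 div n = c2 div n" "c1 mod n = c2 mod n" using g_facts[OF assms(1)] g_facts[OF assms(2)] assms(3) by metis+
  then show ?thesis by (metis div_mult_mod_eq)
qed

lemma kron_entry:
  assumes r: "r < N" and c: "c < N"
  shows "kron (A_mat m) (A_mat n) $$ (r, c) =
    coeff (xpow_mod (rd1 r) (c div n)) (ri1 r) * coeff (xpow_mod (rd2 r) (c mod n)) (ri2 r)"
proof -
  have a: "r div n < m" "c div n < m" using r c by (simp_all add: less_mult_imp_div_less)
  have b: "r mod n < n" "c mod n < n" using n by simp_all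
  have "kron (A_mat m) (A_mat n) $$ (r, c) = A_mat m $$ (r div n, c div n) * A_mat n $$ (r mod n, c mod n)"
    unfolding kron_def using r c by (simp add: A_mat_def)
  also have "\<dots> = coeff (xpow_mod (rd1 r) (c div n)) (ri1 r) * coeff (xpow_mod (rd2 r) (c mod n)) (ri2 r)"
    unfolding rd1_def ri1_def rd2_def ri2_def using A_mat_entry[OF a(1) a(2)] A_mat_entry[OF b(1) b(2)] by simp
  finally show ?thesis .
qed

lemma delta_sum:
  assumes "D \<in> {d. d dvd N}"
  shows "(\<Sum>d\<in>{d. d dvd N}. \<Sum>i<totient d. (if d = D then G d i else (0::int)))
       = (\<Sum>i<totient D. G D i)"
proof -
  have "(\<Sum>d\<in>{d. d dvd N}. \<Sum>i<totient d. (if d = D then G d i else (0::int)))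
      = (\<Sum>d\<in>{d. d dvd N}. (if d = D then (\<Sum>i<totient d. G d i) else 0))"
    by (rule sum.cong) auto
  also have "\<dots> = (\<Sum>i<totient D. G D i)"
    using assms N by (subst sum.delta) auto
  finally show ?thesis .
qed

lemma PA_entry:
  assumes r: "r < N" and c: "c < N"
  shows "(Pm * A_mat N) $$ (r, c) = coeff (xpow_mod (rd1 r) c) (ri1 r) * coeff (xpow_mod (rd2 r) c) (ri2 r)"
proof -
  let ?D = "rd1 r * rd2 r"
  note rf = row_facts[OF r]
  have "(Pm * A_mat N) $$ (r, c) = (\<Sum>s<N. Pm $$ (r, s) * A_mat N $$ (s, c))"
    by (rule mult_entry[OF carriers(1) A_mat_carrier r c])
  also have "\<dots> = (\<Sum>s<N. (\<lambda>p. (if fst p = ?D then coeff (xpow_mod (rd1 r) (snd p)) (ri1 r) * coeff (xpow_mod (rd2 r) (snd p)) (ri2 r) else 0)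
        * coeff (xpow_mod (fst p) c) (snd p)) (A_rows N ! s))"
    by (rule sum.cong[OF refl]) (use r c in \<open>simp add: Pm_def A_mat_entry\<close>)
  also have "\<dots> = (\<Sum>d\<in>{d. d dvd N}. \<Sum>i<totient d. (if d = ?D then coeff (xpow_mod (rd1 r) i) (ri1 r) * coeff (xpow_mod (rd2 r) i) (ri2 r) * coeff (xpow_mod d c) i else 0))"
    by (subst sum_rows[OF N]) (auto intro!: sum.cong)
  also have "\<dots> = (\<Sum>i<totient ?D. coeff (xpow_mod (rd1 r) i) (ri1 r) * coeff (xpow_mod (rd2 r) i) (ri2 r) * coeff (xpow_mod ?D c) i)"
    by (rule delta_sum[where G = "\<lambda>d i. coeff (xpow_mod (rd1 r) i) (ri1 r) * coeff (xpow_mod (rd2 r) i) (ri2 r) * coeff (xpow_mod d c) i"])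
       (use rf in simp)
  also have "\<dots> = coeff (xpow_mod (rd1 r) c) (ri1 r) * coeff (xpow_mod (rd2 r) c) (ri2 r)"
    by (rule KI) (use rf in auto)
  finally show ?thesis .
qed

lemma XQ_entry:
  assumes X: "X \<in> carrier_mat N N" and r: "r < N" and c: "c < N"
  shows "(X * Qm) $$ (r, c) = X $$ (r, g c)"
proof -
  have "(X * Qm) $$ (r, c) = (\<Sum>l<N. X $$ (r, l) * Qm $$ (l, c))"
    by (rule mult_entry[OF X carriers(3) r c])
  also have "\<dots> = (\<Sum>l<N. if l = g c then X $$ (r, l) else 0)"
    by (rule sum.cong[OF refl]) (use c in \<open>simp add: Qm_def\<close>)
  also have "\<dots> = X $$ (r, g c)" using g_facts[OF c] by (subst sum.delta) auto
  finally show ?thesis .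
qed

lemma main_eq: "Pm * A_mat N * Qm = kron (A_mat m) (A_mat n)"
proof (rule eq_matI)
  show "dim_row (Pm * A_mat N * Qm) = dim_row (kron (A_mat m) (A_mat n))"
    using carriers by (simp add: kron_def A_mat_def)
  show "dim_col (Pm * A_mat N * Qm) = dim_col (kron (A_mat m) (A_mat n))"
    using carriers by (simp add: kron_def A_mat_def)
  fix r c assume "r < dim_row (kron (A_mat m) (A_mat n))" "c < dim_col (kron (A_mat m) (A_mat n))"
  then have r: "r < N" and c: "c < N" by (simp_all add: kron_def A_mat_def)
  note rf = row_facts[OF r] and gf = g_facts[OF c]
  have PAc: "Pm * A_mat N \<in> carrier_mat N N" using carriers A_mat_carrier by auto
  have "(Pm * A_mat N * Qm) $$ (r, c) = (Pm * A_mat N) $$ (r, g c)" by (rule XQ_entry[OF PAc r c])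
  also have "\<dots> = coeff (xpow_mod (rd1 r) (g c)) (ri1 r) * coeff (xpow_mod (rd2 r) (g c)) (ri2 r)"
    by (rule PA_entry[OF r gf(1)])
  also have "xpow_mod (rd1 r) (g c) = xpow_mod (rd1 r) (c div n)"
  proof (rule xpow_cong[OF rf(3)])
    show "g c mod rd1 r = c div n mod rd1 r" using gf(2) rf(1) by (metis mod_mod_cancel)
  qed
  also have "xpow_mod (rd2 r) (g c) = xpow_mod (rd2 r) (c mod n)"
  proof (rule xpow_cong[OF rf(6)])
    show "g c mod rd2 r = c mod n mod rd2 r" using gf(3) rf(4) by (metis mod_mod_cancel)
  qed
  finally show "(Pm * A_mat N * Qm) $$ (r, c) = kron (A_mat m) (A_mat n) $$ (r, c)"
    using kron_entry[OF r c] by simp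
qed

end



context krs
begin

lemma row_eq_iff:
  assumes r: "r < N" and r': "r' < N"
  shows "(r = r') = (rd1 r = rd1 r' \<and> ri1 r = ri1 r' \<and> rd2 r = rd2 r' \<and> ri2 r = ri2 r')"
proof -
  have a: "r div n < m" "r' div n < m" using r r' by (simp_all add: less_mult_imp_div_less)
  have b: "r mod n < n" "r' mod n < n" using n by simp_all
  have "(rd1 r = rd1 r' \<and> ri1 r = ri1 r') = (A_rows m ! (r div n) = A_rows m ! (r' div n))"
    unfolding rd1_def ri1_def by (simp add: prod_eq_iff)
  also have "\<dots> = (r div n = r' div n)" by (rule A_rows_inj[OF m a])
  finally have 1: "(rd1 r = rd1 r' \<and> ri1 r = ri1 r') = (r div n = r' div n)" .
  have "(rd2 r = rd2 r' \<and> ri2 r = ri2 r') = (A_rows n ! (r mod n) = A_rows n ! (r' mod n))"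
    unfolding rd2_def ri2_def by (simp add: prod_eq_iff)
  also have "\<dots> = (r mod n = r' mod n)" by (rule A_rows_inj[OF n b])
  finally have 2: "(rd2 r = rd2 r' \<and> ri2 r = ri2 r') = (r mod n = r' mod n)" .
  have "(r = r') = (r div n = r' div n \<and> r mod n = r' mod n)" by (metis div_mult_mod_eq)
  then show ?thesis using 1 2 by blast
qed

lemma PPi_entry:
  assumes r: "r < N" and r': "r' < N"
  shows "(Pm * Pi) $$ (r, r') = (if r = r' then 1 else 0)"
proof -
  let ?D = "rd1 r * rd2 r" and ?D' = "rd1 r' * rd2 r'" and ?c = "ri1 r' * u + ri2 r' * v"
  note rf = row_facts[OF r] and rf' = row_facts[OF r']
  define X where "X = (\<lambda>i. coeff (xpow_mod (rd1 r) i) (ri1 r) * coeff (xpow_mod (rd2 r) i) (ri2 r))"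
  have "(Pm * Pi) $$ (r, r') = (\<Sum>s<N. Pm $$ (r, s) * Pi $$ (s, r'))"
    by (rule mult_entry[OF carriers(1) carriers(2) r r'])
  also have "\<dots> = (\<Sum>s<N. (\<lambda>p. (if fst p = ?D then X (snd p) else 0) *
        (if fst p = ?D' then coeff (xpow_mod (fst p) ?c) (snd p) else 0)) (A_rows N ! s))"
    by (rule sum.cong[OF refl]) (use r r' in \<open>simp add: Pm_def Pi_def X_def\<close>)
  also have "\<dots> = (\<Sum>d\<in>{d. d dvd N}. \<Sum>i<totient d. (if d = ?D then (if ?D = ?D' then X i * coeff (xpow_mod d ?c) i else 0) else 0))"
    by (subst sum_rows[OF N]) (auto intro!: sum.cong)
  also have "\<dots> = (\<Sum>i<totient ?D. (if ?D = ?D' then X i * coeff (xpow_mod ?D ?c) i else 0))"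
    by (rule delta_sum[where G = "\<lambda>d i. (if ?D = ?D' then X i * coeff (xpow_mod d ?c) i else 0)"])
       (use rf in simp)
  also have "\<dots> = (if r = r' then 1 else 0)"
  proof (cases "?D = ?D'")
    case False
    then have "r \<noteq> r'" by auto
    then show ?thesis using False by simp
  next
    case True
    have e: "rd1 r = rd1 r'" "rd2 r = rd2 r'"
      using decomp_unique[OF cop rf(1) rf'(1) rf(4) rf'(4) True] by auto
    have "(\<Sum>i<totient ?D. (if ?D = ?D' then X i * coeff (xpow_mod ?D ?c) i else 0))
        = (\<Sum>i<totient ?D. X i * coeff (xpow_mod ?D ?c) i)" using True by simp
    also have "\<dots> = coeff (xpow_mod (rd1 r) ?c) (ri1 r) * coeff (xpow_mod (rd2 r) ?c) (ri2 r)"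
      unfolding X_def by (rule KI) (use rf in auto)
    also have "xpow_mod (rd1 r) ?c = xpow_mod (rd1 r) (ri1 r')"
    proof (rule xpow_cong[OF rf(3)])
      have "?c mod m = ri1 r' mod m" by (rule lin_mod[OF u(1) v(1)])
      then show "?c mod rd1 r = ri1 r' mod rd1 r" using rf(1) by (metis mod_mod_cancel)
    qed
    also have "\<dots> = monom 1 (ri1 r')" using xpow_small[OF rf(3)] rf'(2) e by simp
    also have "xpow_mod (rd2 r) ?c = xpow_mod (rd2 r) (ri2 r')"
    proof (rule xpow_cong[OF rf(6)])
      have "(ri2 r' * v + ri1 r' * u) mod n = ri2 r' mod n" by (rule lin_mod[OF v(2) u(2)])
      then have "?c mod n = ri2 r' mod n" by (simp add: add.commute)
      then show "?c mod rd2 r = ri2 r' mod rd2 r" using rf(4) by (metis mod_mod_cancel)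
    qed
    also have "\<dots> = monom 1 (ri2 r')" using xpow_small[OF rf(6)] rf'(5) e by simp
    finally show ?thesis using row_eq_iff[OF r r'] e by (simp add: coeff_monom)
  qed
  finally show ?thesis .
qed

lemma PPi: "Pm * Pi = 1\<^sub>m N"
  by (rule eq_matI) (use carriers PPi_entry in auto)

lemma PiP: "Pi * Pm = 1\<^sub>m N"
  by (rule int_inv_comm[OF carriers(1) carriers(2) PPi])

lemma QtQ: "transpose_mat Qm * Qm = 1\<^sub>m N"
proof (rule eq_matI)
  fix c1 c2 assume "c1 < dim_row (1\<^sub>m N)" "c2 < dim_col (1\<^sub>m N)"
  then have c: "c1 < N" "c2 < N" by auto
  have "(transpose_mat Qm * Qm) $$ (c1, c2) = (\<Sum>l<N. transpose_mat Qm $$ (c1, l) * Qm $$ (l, c2))"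
    by (rule mult_entry[OF carriers(4) carriers(3) c])
  also have "\<dots> = (\<Sum>l<N. if l = g c1 then (if g c1 = g c2 then 1 else 0) else 0)"
    by (rule sum.cong[OF refl]) (use c in \<open>auto simp: Qm_def\<close>)
  also have "\<dots> = (if g c1 = g c2 then 1 else 0)" using g_facts(1)[OF c(1)] by (subst sum.delta) auto
  also have "\<dots> = (if c1 = c2 then 1 else 0)" using g_inj[OF c] by auto
  finally show "(transpose_mat Qm * Qm) $$ (c1, c2) = 1\<^sub>m N $$ (c1, c2)" using c by simp
qed (use carriers in auto)

lemma QQt: "Qm * transpose_mat Qm = 1\<^sub>m N"
  by (rule int_inv_comm[OF carriers(4) carriers(3) QtQ])

end

lemma same_snf:
  fixes K A P Q P' Q' :: "int mat"
  assumes K: "K \<in> carrier_mat k k" and A: "A \<in> carrier_mat k k"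
    and P: "P \<in> carrier_mat k k" and Q: "Q \<in> carrier_mat k k"
    and P': "P' \<in> carrier_mat k k" and Q': "Q' \<in> carrier_mat k k"
    and KA: "K = P * A * Q" and PP: "P' * P = 1\<^sub>m k" "P * P' = 1\<^sub>m k"
    and QQ: "Q * Q' = 1\<^sub>m k" "Q' * Q = 1\<^sub>m k"
  shows "smith_normal_form K = smith_normal_form A"
proof -
  have iP: "invertible_mat P" by (rule invertible_by[OF P P' PP(2)])
  have iQ: "invertible_mat Q" by (rule invertible_by[OF Q Q' QQ(1)])
  have iP': "invertible_mat P'" by (rule invertible_by[OF P' P PP(1)])
  have iQ': "invertible_mat Q'" by (rule invertible_by[OF Q' Q QQ(2)])
  have AK: "A = P' * K * Q'"
  proof -
    have "P' * K * Q' = P' * (P * A * Q) * Q'" using KA by simp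
    also have "\<dots> = (P' * P) * A * (Q * Q')" using P Q P' Q' A by (simp add: assoc_mult_mat[of _ k k _ k _ k])
    also have "\<dots> = A" using PP QQ A by simp
    finally show ?thesis by simp
  qed
  have key: "\<And>D. (\<exists>P1 Q1. P1 \<in> carrier_mat k k \<and> invertible_mat P1 \<and> Q1 \<in> carrier_mat k k \<and> invertible_mat Q1 \<and> D = P1 * K * Q1)
      = (\<exists>P1 Q1. P1 \<in> carrier_mat k k \<and> invertible_mat P1 \<and> Q1 \<in> carrier_mat k k \<and> invertible_mat Q1 \<and> D = P1 * A * Q1)"
  proof
    fix D
    assume "\<exists>P1 Q1. P1 \<in> carrier_mat k k \<and> invertible_mat P1 \<and> Q1 \<in> carrier_mat k k \<and> invertible_mat Q1 \<and> D = P1 * K * Q1"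
    then obtain P1 Q1 where h: "P1 \<in> carrier_mat k k" "invertible_mat P1" "Q1 \<in> carrier_mat k k" "invertible_mat Q1" "D = P1 * K * Q1" by blast
    have "D = (P1 * P) * A * (Q * Q1)" using h(5) KA h(1,3) P Q A by (simp add: assoc_mult_mat[of _ k k _ k _ k])
    moreover have "invertible_mat (P1 * P)" by (rule invertible_mult[OF h(1,2) P iP])
    moreover have "invertible_mat (Q * Q1)" by (rule invertible_mult[OF Q iQ h(3,4)])
    ultimately show "\<exists>P1 Q1. P1 \<in> carrier_mat k k \<and> invertible_mat P1 \<and> Q1 \<in> carrier_mat k k \<and> invertible_mat Q1 \<and> D = P1 * A * Q1"
      using h P Q by (intro exI[of _ "P1 * P"] exI[of _ "Q * Q1"]) auto
  next
    fix D
    assume "\<exists>P1 Q1. P1 \<in> carrier_mat k k \<and> invertible_mat P1 \<and> Q1 \<in> carrier_mat k k \<and> invertible_mat Q1 \<and> D = P1 * A * Q1"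
    then obtain P1 Q1 where h: "P1 \<in> carrier_mat k k" "invertible_mat P1" "Q1 \<in> carrier_mat k k" "invertible_mat Q1" "D = P1 * A * Q1" by blast
    have "D = (P1 * P') * K * (Q' * Q1)" using h(5) AK h(1,3) P' Q' K by (simp add: assoc_mult_mat[of _ k k _ k _ k])
    moreover have "invertible_mat (P1 * P')" by (rule invertible_mult[OF h(1,2) P' iP'])
    moreover have "invertible_mat (Q' * Q1)" by (rule invertible_mult[OF Q' iQ' h(3,4)])
    ultimately show "\<exists>P1 Q1. P1 \<in> carrier_mat k k \<and> invertible_mat P1 \<and> Q1 \<in> carrier_mat k k \<and> invertible_mat Q1 \<and> D = P1 * K * Q1"
      using h P' Q' by (intro exI[of _ "P1 * P'"] exI[of _ "Q' * Q1"]) auto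
  qed
  have dims: "dim_row K = k" "dim_col K = k" "dim_row A = k" "dim_col A = k" using K A by auto
  show ?thesis unfolding smith_normal_form_def dims key ..
qed

theorem theorem2p4:
  fixes m n :: nat
  assumes "m > 0" and "n > 0" and "coprime m n"
  shows "smith_normal_form (kron (A_mat m) (A_mat n)) = smith_normal_form (A_mat (m * n))"
proof -
  obtain u where u: "[u = 1] (mod m)" "[u = 0] (mod n)" using binary_chinese_remainder_nat[OF assms(3)] by blast
  obtain v where v: "[v = 0] (mod m)" "[v = 1] (mod n)" using binary_chinese_remainder_nat[OF assms(3)] by blast
  interpret krs m n u v
    by unfold_locales (use assms u v in \<open>auto simp: cong_def\<close>)
  have K: "kron (A_mat m) (A_mat n) \<in> carrier_mat N N" by (simp add: kron_def A_mat_def)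
  show ?thesis
    by (rule same_snf[OF K A_mat_carrier carriers(1) carriers(3) carriers(2) carriers(4)
          main_eq[symmetric] PiP PPi QQt QtQ])
qed


end
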